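(* Consider an attack graph $G=(V,\mathcal{E})$ with source $v_s$ and a single non-behavioral defender with budget $B\ge0$, whose feasible investments are $X=\{x\in\mathbb{R}^{|\mathcal{E}|}_{\ge 0}:\mathbf{1}^Tx\le B\}$. Let the attack success probability on each edge be $p_{i,j}(x_{i,j})=e^{-x_{i,j}}$. Suppose there is a single target asset $v_t$ (reachable from $v_s$) with loss $L_t\ge0$, all other assets having loss $0$, so that the defender's (true) expected cost is $$\hat C(x)=L_t\max_{P\in\mathcal{P}_t}\prod_{(v_i,v_j)\in P}e^{-x_{i,j}}.$$ Let $\mathcal{E}_c\subseteq\mathcal{E}$ be a min-cut between $v_s$ and $v_t$, with $N=|\mathcal{E}_c|$. Then the investment that places $B/N$ on each edge of $\mathcal{E}_c$ and $0$ on every other edge minimizes $\hat C$ over $X$; i.e., it is optimal for the defender to distribute all of her budget equally only on the edges of $\mathcal{E}_c$.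
   Context: An attack graph is a finite directed graph with a designated source node $v_s$. $\mathcal{P}_t$ is the set of directed paths from $v_s$ to $v_t$ (viewed as sets of edges). An edge-cut between $v_s$ and $v_t$ is a set of edges whose removal destroys all directed paths from $v_s$ to $v_t$; a min-cut is an edge-cut of minimum cardinality. *)

theory Defs
  imports Complex_Main
begin

definition is_dpath :: "('v \<times> 'v) set \<Rightarrow> 'v \<Rightarrow> 'v \<Rightarrow> 'v list \<Rightarrow> bool" where
  "is_dpath E s t vs \<longleftrightarrow> vs \<noteq> [] \<and> hd vs = s \<and> last vs = t \<and> distinct vs
     \<and> set (zip vs (tl vs)) \<subseteq> E"

definition path_edges :: "'v list \<Rightarrow> ('v \<times> 'v) set" where
  "path_edges vs = set (zip vs (tl vs))"

definition paths :: "('v \<times> 'v) set \<Rightarrow> 'v \<Rightarrow> 'v \<Rightarrow> ('v \<times> 'v) set set" where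
  "paths E s t = path_edges ` {vs. is_dpath E s t vs}"

definition is_edge_cut :: "('v \<times> 'v) set \<Rightarrow> 'v \<Rightarrow> 'v \<Rightarrow> ('v \<times> 'v) set \<Rightarrow> bool" where
  "is_edge_cut E s t C \<longleftrightarrow> C \<subseteq> E \<and> (\<forall>P \<in> paths E s t. P \<inter> C \<noteq> {})"

definition is_min_cut :: "('v \<times> 'v) set \<Rightarrow> 'v \<Rightarrow> 'v \<Rightarrow> ('v \<times> 'v) set \<Rightarrow> bool" where
  "is_min_cut E s t C \<longleftrightarrow> is_edge_cut E s t C \<and>
     (\<forall>C'. is_edge_cut E s t C' \<longrightarrow> card C \<le> card C')"

text \<open>Feasible investments: nonnegative on every edge, total at most B
  (values off E are irrelevant).\<close>
definition feasible :: "('v \<times> 'v) set \<Rightarrow> real \<Rightarrow> (('v \<times> 'v) \<Rightarrow> real) \<Rightarrow> bool" where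
  "feasible E B x \<longleftrightarrow> (\<forall>e\<in>E. 0 \<le> x e) \<and> (\<Sum>e\<in>E. x e) \<le> B"

definition true_cost :: "('v \<times> 'v) set \<Rightarrow> 'v \<Rightarrow> 'v \<Rightarrow> real \<Rightarrow> (('v \<times> 'v) \<Rightarrow> real) \<Rightarrow> real" where
  "true_cost E s t L x = L * Max ((\<lambda>P. \<Prod>e\<in>P. exp (- x e)) ` paths E s t)"

end

theory Submission imports Defs begin

lemma pe_cons2: "path_edges (a # b # l) = insert (a,b) (path_edges (b # l))"
  by (simp add: path_edges_def)
lemma pe_single[simp]: "path_edges [a] = {}" by (simp add: path_edges_def)
lemma pe_nil[simp]: "path_edges [] = {}" by (simp add: path_edges_def)

lemma pe_snoc: "vs \<noteq> [] \<Longrightarrow> path_edges (vs @ [w]) = insert (last vs, w) (path_edges vs)"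
proof (induction vs)
  case Nil then show ?case by simp
next
  case (Cons a r)
  then show ?case by (cases r) (auto simp: pe_cons2)
qed

lemma pe_prefix: "path_edges xs \<subseteq> path_edges (xs @ l)"
proof (induction xs)
  case Nil then show ?case by simp
next
  case (Cons a r)
  then show ?case by (cases r) (auto simp: pe_cons2)
qed

lemma pe_suffix: "path_edges ws \<subseteq> path_edges (ys @ ws)"
proof (induction ys)
  case Nil then show ?case by simp
next
  case (Cons y r)
  then show ?case by (cases "r @ ws") (auto simp: pe_cons2)
qed

lemma pe_mem: "(a,b) \<in> path_edges vs \<Longrightarrow> a \<in> set vs \<and> b \<in> set vs"
  unfolding path_edges_def
  by (cases vs) (auto dest: set_zip_leftD set_zip_rightD)

lemma pe_walk: "vs \<noteq> [] \<Longrightarrow> (hd vs, last vs) \<in> (path_edges vs)\<^sup>*"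
proof (induction vs)
  case Nil then show ?case by simp
next
  case (Cons a r)
  show ?case
  proof (cases r)
    case Nil then show ?thesis by simp
  next
    case (Cons b r')
    have "(b, last r) \<in> (path_edges r)\<^sup>*" using Cons.IH Cons by simp
    also have "(path_edges r)\<^sup>* \<subseteq> (path_edges (a # r))\<^sup>*"
      by (rule rtrancl_mono) (simp add: Cons pe_cons2 subset_insertI)
    finally have "(b, last r) \<in> (path_edges (a # r))\<^sup>*" .
    moreover have "(a, b) \<in> path_edges (a # r)" using Cons by (simp add: pe_cons2)
    ultimately show ?thesis using Cons by (simp add: converse_rtrancl_into_rtrancl)
  qed
qed

lemma dpath_walk: "is_dpath F a b vs \<Longrightarrow> (a,b) \<in> (path_edges vs)\<^sup>*"
  using pe_walk unfolding is_dpath_def by blast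

lemma walk_dpath: "(a,b) \<in> F\<^sup>* \<Longrightarrow> \<exists>vs. is_dpath F a b vs"
proof (induction rule: rtrancl_induct)
  case base
  then show ?case by (rule exI[of _ "[a]"]) (simp add: is_dpath_def)
next
  case (step u w)
  then obtain vs where vs: "is_dpath F a u vs" by blast
  show ?case
  proof (cases "w \<in> set vs")
    case True
    then obtain ys zs where sp: "vs = ys @ w # zs" by (meson split_list)
    have "is_dpath F a w (ys @ [w])"
    proof -
      have "hd (ys @ [w]) = a" using vs sp unfolding is_dpath_def by (cases ys) auto
      moreover have "distinct (ys @ [w])" using vs sp unfolding is_dpath_def by auto
      moreover have "path_edges (ys @ [w]) \<subseteq> path_edges vs"
        using pe_prefix[of "ys @ [w]" zs] sp by simp
      ultimately show ?thesis using vs unfolding is_dpath_def path_edges_def by auto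
    qed
    then show ?thesis by blast
  next
    case False
    have "is_dpath F a w (vs @ [w])"
      using vs False step(2) pe_snoc[of vs w] unfolding is_dpath_def path_edges_def
      by (auto simp: hd_append)
    then show ?thesis by blast
  qed
qed

lemma split_last_in:
  assumes "last vs \<notin> R" "\<exists>v\<in>set vs. v \<in> R"
  shows "\<exists>ys ws. vs = ys @ ws \<and> ws \<noteq> [] \<and> hd ws \<in> R \<and> (\<forall>v\<in>set (tl ws). v \<notin> R)"
  using assms
proof (induction vs)
  case Nil then show ?case by simp
next
  case (Cons a r)
  show ?case
  proof (cases "\<exists>v\<in>set r. v \<in> R")
    case True
    then have "r \<noteq> []" by auto
    then have "last r \<notin> R" using Cons.prems by simp
    then obtain ys ws where "r = ys @ ws \<and> ws \<noteq> [] \<and> hd ws \<in> R \<and> (\<forall>v\<in>set (tl ws). v \<notin> R)"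
      using Cons.IH True by blast
    then show ?thesis by (metis append_Cons)
  next
    case False
    then have "a \<in> R" using Cons.prems by auto
    then show ?thesis using False by (intro exI[of _ "[]"] exI[of _ "a # r"]) auto
  qed
qed

lemma first_edge_unique:
  assumes "distinct (w # r)" "(w, b) \<in> path_edges (w # r)"
  shows "b = hd r"
proof (cases r)
  case Nil then show ?thesis using assms by simp
next
  case (Cons b0 l)
  then show ?thesis using assms pe_mem[of w b "b0 # l"] by (auto simp: pe_cons2)
qed

lemma crossing_edge:
  assumes "vs \<noteq> []" "hd vs \<in> R" "last vs \<notin> R"
  shows "\<exists>u v. (u,v) \<in> path_edges vs \<and> u \<in> R \<and> v \<notin> R"
  using assms
proof (induction vs)
  case Nil then show ?case by simp
next
  case (Cons a r)
  show ?case
  proof (cases r)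
    case Nil then show ?thesis using Cons.prems by simp
  next
    case (Cons b l)
    show ?thesis
    proof (cases "b \<in> R")
      case True
      then obtain u v where "(u,v) \<in> path_edges r" "u \<in> R" "v \<notin> R"
        using Cons.IH Cons.prems Cons by auto
      then show ?thesis using Cons by (auto simp: pe_cons2)
    next
      case False
      then show ?thesis using Cons.prems Cons by (auto simp: pe_cons2)
    qed
  qed
qed

lemma sum_ind: "finite A \<Longrightarrow> (\<Sum>e\<in>A. if e \<in> C then m else 0) = (m::real) * real (card (A \<inter> C))"
  by (simp add: sum.If_cases Int_def)

lemma dpath_mono: "is_dpath F a b vs \<Longrightarrow> F \<subseteq> G \<Longrightarrow> is_dpath G a b vs"
  unfolding is_dpath_def by blast

lemma paths_sub: "P \<in> paths E s t \<Longrightarrow> P \<subseteq> E"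
  unfolding paths_def is_dpath_def path_edges_def by auto

lemma main_lemma:
  fixes x :: "('v \<times> 'v) \<Rightarrow> real"
  assumes fin: "finite E" and "\<forall>e\<in>E. 0 \<le> x e" and "\<forall>P\<in>paths E s t. D \<le> sum x P"
    and cuts: "\<forall>C. is_edge_cut E s t C \<longrightarrow> N \<le> card C"
  shows "real N * D \<le> sum x E"
  using assms(2,3)
proof (induction "card {e\<in>E. 0 < x e}" arbitrary: x D rule: less_induct)
  case less
  have nn: "\<forall>e\<in>E. 0 \<le> x e" and pd: "\<forall>P\<in>paths E s t. D \<le> sum x P" using less.prems by auto
  have sum_nn: "0 \<le> sum x E" using nn by (simp add: sum_nonneg)
  show ?case
  proof (cases "D \<le> 0")
    case True
    then have "real N * D \<le> 0" by (simp add: mult_nonneg_nonpos)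
    then show ?thesis using sum_nn by linarith
  next
    case False
    then have Dpos: "0 < D" by simp
    define Z where "Z = {e\<in>E. x e = 0}"
    define R where "R = {v. (s,v) \<in> Z\<^sup>*}"
    define C where "C = {(u,v). (u,v) \<in> E \<and> u \<in> R \<and> v \<notin> R}"
    have ZE: "Z \<subseteq> E" unfolding Z_def by auto
    have sR: "s \<in> R" unfolding R_def by simp
    have tR: "t \<notin> R"
    proof
      assume "t \<in> R"
      then have "(s,t) \<in> Z\<^sup>*" unfolding R_def by simp
      then obtain vs where vs: "is_dpath Z s t vs" using walk_dpath[of s t Z] by blast
      have "is_dpath E s t vs" using dpath_mono[OF vs ZE] by simp
      then have "path_edges vs \<in> paths E s t" unfolding paths_def by blast
      then have "D \<le> sum x (path_edges vs)" using pd by blast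
      moreover have "path_edges vs \<subseteq> Z" using vs unfolding is_dpath_def path_edges_def by simp
      then have "sum x (path_edges vs) = 0" unfolding Z_def by (intro sum.neutral) auto
      ultimately show False using Dpos by simp
    qed
    have CE: "C \<subseteq> E" unfolding C_def by auto
    have finC: "finite C" by (rule finite_subset[OF CE fin])
    have Ccut: "is_edge_cut E s t C"
      unfolding is_edge_cut_def
    proof (intro conjI CE ballI)
      fix P assume "P \<in> paths E s t"
      then obtain vs where vs: "is_dpath E s t vs" and P: "P = path_edges vs"
        unfolding paths_def by blast
      then obtain u v where uv: "(u,v) \<in> path_edges vs" "u \<in> R" "v \<notin> R"
        using crossing_edge[of vs R] sR tR unfolding is_dpath_def by auto
      then have "(u,v) \<in> E" using vs unfolding is_dpath_def path_edges_def by auto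
      then have "(u,v) \<in> P \<inter> C" using uv P unfolding C_def by auto
      then show "P \<inter> C \<noteq> {}" by blast
    qed
    then have NC: "N \<le> card C" using cuts by blast
    have Cpos: "\<forall>e\<in>C. 0 < x e"
    proof
      fix e assume e: "e \<in> C"
      then obtain u v where uv: "e = (u,v)" "(u,v) \<in> E" "u \<in> R" "v \<notin> R" unfolding C_def by auto
      show "0 < x e"
      proof (rule ccontr)
        assume "\<not> 0 < x e"
        then have "x e = 0" using nn uv by force
        then have "(u,v) \<in> Z" using uv unfolding Z_def by auto
        then have "(s,v) \<in> Z\<^sup>*" using uv(3) unfolding R_def by (auto intro: rtrancl_into_rtrancl)
        then show False using uv(4) unfolding R_def by simp
      qed
    qed
    show ?thesis
    proof (cases "C = {}")
      case True
      then have "N = 0" using NC by simp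
      then show ?thesis using sum_nn by simp
    next
      case Cne: False
      define m where "m = Min (x ` C)"
      have mle: "\<forall>e\<in>C. m \<le> x e" unfolding m_def using finC by auto
      obtain e0 where e0: "e0 \<in> C" "x e0 = m"
        unfolding m_def using finC Cne by (metis (mono_tags, lifting) Min_in finite_imageI image_iff image_is_empty)
      have mpos: "0 < m" using e0 Cpos by auto
      show ?thesis
      proof (cases "D \<le> m")
        case True
        have "real N * D \<le> real (card C) * D" using NC Dpos by simp
        also have "\<dots> = (\<Sum>e\<in>C. D)" by simp
        also have "\<dots> \<le> sum x C" using True mle by (intro sum_mono) auto
        also have "\<dots> \<le> sum x E" using CE fin nn by (intro sum_mono2) auto
        finally show ?thesis .
      next
        case False
        define x' where "x' = (\<lambda>e. if e \<in> C then x e - m else x e)"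
        have nn': "\<forall>e\<in>E. 0 \<le> x' e" using nn mle unfolding x'_def by auto
        have diff: "\<And>A. finite A \<Longrightarrow> sum x A = sum x' A + m * real (card (A \<inter> C))"
        proof -
          fix A :: "('v \<times> 'v) set" assume fA: "finite A"
          have "sum x A = (\<Sum>e\<in>A. x' e + (if e \<in> C then m else 0))"
            unfolding x'_def by (intro sum.cong) auto
          also have "\<dots> = sum x' A + m * real (card (A \<inter> C))"
            by (simp add: sum.distrib sum_ind[OF fA])
          finally show "sum x A = sum x' A + m * real (card (A \<inter> C))" .
        qed
        have lt: "card {e\<in>E. 0 < x' e} < card {e\<in>E. 0 < x e}"
        proof (rule psubset_card_mono)
          show "finite {e\<in>E. 0 < x e}" using fin by simp
          have "{e\<in>E. 0 < x' e} \<subseteq> {e\<in>E. 0 < x e}" using mpos unfolding x'_def by auto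
          moreover have "e0 \<in> {e\<in>E. 0 < x e}" using e0 Cpos CE by auto
          moreover have "e0 \<notin> {e\<in>E. 0 < x' e}" using e0 unfolding x'_def by auto
          ultimately show "{e\<in>E. 0 < x' e} \<subset> {e\<in>E. 0 < x e}" by blast
        qed
        have pd': "\<forall>P\<in>paths E s t. D - m \<le> sum x' P"
        proof
          fix P assume "P \<in> paths E s t"
          then obtain vs where vs: "is_dpath E s t vs" and P: "P = path_edges vs"
            unfolding paths_def by blast
          have "\<exists>v\<in>set vs. v \<in> R" using vs sR unfolding is_dpath_def by (metis list.set_sel(1))
          moreover have "last vs \<notin> R" using vs tR unfolding is_dpath_def by simp
          ultimately obtain ys ws where sp: "vs = ys @ ws" "ws \<noteq> []" "hd ws \<in> R"
            "\<forall>v\<in>set (tl ws). v \<notin> R" using split_last_in by blast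
          obtain w r where wr: "ws = w # r" using sp(2) by (cases ws) auto
          have PEws: "path_edges ws \<subseteq> P" using P sp pe_suffix by blast
          have PE: "P \<subseteq> E" using vs P unfolding is_dpath_def path_edges_def by simp
          have finP: "finite P" by (rule finite_subset[OF PE fin])
          have finws: "finite (path_edges ws)" by (rule finite_subset[OF PEws finP])
          have lastws: "last ws = t" using vs sp unfolding is_dpath_def by simp
          have dws: "distinct ws" using vs sp unfolding is_dpath_def by simp
          have wt: "(w,t) \<in> (path_edges ws)\<^sup>*" using pe_walk[OF sp(2)] wr lastws by simp
          have sw: "(s,w) \<in> Z\<^sup>*" using sp(3) wr unfolding R_def by simp
          define F where "F = Z \<union> path_edges ws"
          have ZF: "Z \<subseteq> F" and WF: "path_edges ws \<subseteq> F" by (simp_all add: F_def)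
          have "(s,t) \<in> F\<^sup>*"
            using subsetD[OF rtrancl_mono[OF ZF] sw] subsetD[OF rtrancl_mono[OF WF] wt]
            by (rule rtrancl_trans)
          then obtain us where us: "is_dpath F s t us" using walk_dpath[of s t F] by blast
          have FE: "F \<subseteq> E" unfolding F_def using ZE PEws PE by blast
          define Q where "Q = path_edges us"
          have "Q \<in> paths E s t" unfolding paths_def Q_def using dpath_mono[OF us FE] by (intro imageI) simp
          then have DQ: "D \<le> sum x Q" using pd by blast
          have QF: "Q \<subseteq> F" using us unfolding Q_def is_dpath_def path_edges_def by simp
          have finQ: "finite Q" by (rule finite_subset[OF order_trans[OF QF FE] fin])
          have s1: "sum x Q = sum x (Q \<inter> path_edges ws) + sum x (Q - path_edges ws)"
            using finQ by (rule sum.Int_Diff)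
          have s2: "sum x (Q - path_edges ws) = 0"
            using QF unfolding F_def Z_def by (intro sum.neutral) auto
          have s3: "sum x (Q \<inter> path_edges ws) \<le> sum x (path_edges ws)"
            using finws nn PEws PE by (intro sum_mono2) auto
          have Qle: "sum x Q \<le> sum x (path_edges ws)" using s1 s2 s3 by linarith
          have "path_edges ws \<inter> C \<subseteq> {(w, hd r)}"
          proof
            fix e assume e: "e \<in> path_edges ws \<inter> C"
            then obtain a b where ab: "e = (a,b)" by (cases e)
            have "a \<in> R" using e ab unfolding C_def by auto
            have "a \<in> set ws" using pe_mem[of a b ws] e ab by blast
            then have "a = w" using sp(4) wr \<open>a \<in> R\<close> by auto
            then have "b = hd r" using first_edge_unique[of w r b] dws wr e ab by auto
            then show "e \<in> {(w, hd r)}" using ab \<open>a = w\<close> by simp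
          qed
          then have "card (path_edges ws \<inter> C) \<le> 1"
            using card_mono[of "{(w, hd r)}"] by fastforce
          then have "m * real (card (path_edges ws \<inter> C)) \<le> m"
            using mpos by (simp add: mult_le_cancel_left1)
          then have "sum x (path_edges ws) - m \<le> sum x' (path_edges ws)"
            using diff[OF finws] by linarith
          also have "\<dots> \<le> sum x' P" using finP nn' PEws PE by (intro sum_mono2) auto
          finally show "D - m \<le> sum x' P" using DQ Qle by linarith
        qed
        have IH: "real N * (D - m) \<le> sum x' E"
          using less.hyps[OF lt] nn' pd' by blast
        have "sum x E = sum x' E + m * real (card C)"
          using diff[OF fin] CE by (simp add: Int_absorb1)
        moreover have "real N * m \<le> real (card C) * m" using NC mpos by simp
        ultimately show ?thesis using IH by (simp add: algebra_simps)
      qed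
    qed
  qed
qed

lemma prod_exp: "finite P \<Longrightarrow> (\<Prod>e\<in>P. exp (- x e)) = exp (- sum x P)"
  using exp_sum[of P "\<lambda>e. - x e"] by (simp add: sum_negf)

theorem proposition2:
  fixes E :: "('v \<times> 'v) set" and s t :: 'v and B L :: real and Ec :: "('v \<times> 'v) set"
  assumes "finite E"
    and "0 \<le> B" and "0 \<le> L"
    and "paths E s t \<noteq> {}"
    and "is_min_cut E s t Ec"
  defines "xstar \<equiv> (\<lambda>e. if e \<in> Ec then B / real (card Ec) else 0)"
  shows "feasible E B xstar \<and>
         (\<forall>x. feasible E B x \<longrightarrow> true_cost E s t L xstar \<le> true_cost E s t L x)"
proof -
  note fin = assms(1)
  have cut: "is_edge_cut E s t Ec" and minc: "\<forall>C'. is_edge_cut E s t C' \<longrightarrow> card Ec \<le> card C'"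
    using assms(5) unfolding is_min_cut_def by auto
  have EcE: "Ec \<subseteq> E" using cut unfolding is_edge_cut_def by auto
  have finEc: "finite Ec" by (rule finite_subset[OF EcE fin])
  obtain P0 where P0: "P0 \<in> paths E s t" using assms(4) by blast
  have "P0 \<inter> Ec \<noteq> {}" using cut P0 unfolding is_edge_cut_def by auto
  then have "Ec \<noteq> {}" by blast
  then have Npos: "0 < card Ec" using finEc by (simp add: card_gt_0_iff)
  define N where "N = card Ec"
  have Npos': "0 < real N" using Npos N_def by simp
  have finPaths: "finite (paths E s t)"
  proof (rule finite_subset)
    show "paths E s t \<subseteq> Pow E" by (auto dest: paths_sub)
    show "finite (Pow E)" using fin by simp
  qed
  have finPs: "\<And>P. P \<in> paths E s t \<Longrightarrow> finite P"
    using paths_sub fin finite_subset by metis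
  have xs_sum: "\<And>A. finite A \<Longrightarrow> sum xstar A = B / real N * real (card (A \<inter> Ec))"
    unfolding xstar_def N_def by (rule sum_ind)
  have feas: "feasible E B xstar"
    unfolding feasible_def
  proof
    show "\<forall>e\<in>E. 0 \<le> xstar e" using assms(2) unfolding xstar_def by auto
    have "sum xstar E = B / real N * real N"
      using xs_sum[OF fin] EcE N_def by (simp add: Int_absorb1)
    then show "sum xstar E \<le> B" using Npos' by simp
  qed
  define f :: "(('v \<times> 'v) \<Rightarrow> real) \<Rightarrow> ('v \<times> 'v) set \<Rightarrow> real" where "f = (\<lambda>x. \<lambda>P. \<Prod>e\<in>P. exp (- x e))"
  have tc: "\<And>x. true_cost E s t L x = L * Max (f x ` paths E s t)"
    unfolding true_cost_def f_def by simp
  have up: "Max (f xstar ` paths E s t) \<le> exp (- (B / real N))"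
  proof (subst Max_le_iff)
    show "finite (f xstar ` paths E s t)" using finPaths by simp
    show "f xstar ` paths E s t \<noteq> {}" using assms(4) by simp
    show "\<forall>a\<in>f xstar ` paths E s t. a \<le> exp (- (B / real N))"
    proof
      fix a assume "a \<in> f xstar ` paths E s t"
      then obtain P where P: "P \<in> paths E s t" "a = f xstar P" by blast
      have fP: "finite P" using finPs P by blast
      have "P \<inter> Ec \<noteq> {}" using cut P unfolding is_edge_cut_def by auto
      then have c1: "1 \<le> real (card (P \<inter> Ec))" using fP by (simp add: Suc_le_eq card_gt_0_iff)
      have "0 \<le> B / real N" using assms(2) Npos' by simp
      then have "B / real N * 1 \<le> B / real N * real (card (P \<inter> Ec))"
        using c1 by (rule mult_left_mono[rotated])
      then have "B / real N \<le> B / real N * real (card (P \<inter> Ec))" by simp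
      then have "B / real N \<le> sum xstar P" using xs_sum[OF fP] by simp
      then show "a \<le> exp (- (B / real N))" using P prod_exp[OF fP, of xstar] unfolding f_def by simp
    qed
  qed
  have low: "exp (- (B / real N)) \<le> Max (f x ` paths E s t)" if fx: "feasible E B x" for x
  proof -
    have nn: "\<forall>e\<in>E. 0 \<le> x e" and sB: "sum x E \<le> B" using fx unfolding feasible_def by auto
    define D where "D = Min (sum x ` paths E s t)"
    have "D \<in> sum x ` paths E s t" unfolding D_def using finPaths assms(4) by (intro Min_in) auto
    then obtain P where P: "P \<in> paths E s t" "sum x P = D" by blast
    have "\<forall>P\<in>paths E s t. D \<le> sum x P" unfolding D_def using finPaths by auto
    then have "real N * D \<le> sum x E"
      using main_lemma[OF fin nn, of s t D N] minc N_def by blast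
    then have "real N * D \<le> B" using sB by linarith
    then have "D \<le> B / real N" using Npos' by (simp add: field_simps)
    then have "exp (- (B / real N)) \<le> exp (- D)" by simp
    also have "exp (- D) = f x P" using P prod_exp[OF finPs[OF P(1)], of x] unfolding f_def by simp
    also have "f x P \<le> Max (f x ` paths E s t)" using finPaths P by (intro Max_ge) auto
    finally show ?thesis .
  qed
  show ?thesis
  proof (intro conjI feas allI impI)
    fix x assume "feasible E B x"
    then have "Max (f xstar ` paths E s t) \<le> Max (f x ` paths E s t)" using up low by (meson order_trans)
    then show "true_cost E s t L xstar \<le> true_cost E s t L x"
      unfolding tc using assms(3) by (simp add: mult_left_mono)
  qed
qed

end
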